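(* Let $\alpha\in[1,2]$, $n,m\ge1$, let $\omega=(\omega_1,\dots,\omega_n)$ be a weight vector with $\omega_j\ge0$, $\sum_j\omega_j=1$, and let $\rho_1,\dots,\rho_n$ be $m\times m$ density matrices. Then $$D_\alpha^\omega(\rho_1,\dots,\rho_n)\le H_\alpha(\omega),$$ where for $\alpha\neq1$, $H_\alpha(\omega)=\frac{1}{1-\alpha}\bigl(\sum_{j=1}^n\omega_j^\alpha-1\bigr)$ is the Tsallis entropy of $\omega$, and for $\alpha=1$, $H_1(\omega)=-\sum_j\omega_j\log\omega_j$ is its Shannon entropy (equivalently, $H_\alpha(\omega)=H_\alpha(\mathrm{diag}(\omega_1,\dots,\omega_n))$).
   Context: An $m\times m$ density matrix is a real symmetric positive semidefinite $m\times m$ matrix with trace $1$. For $\alpha\in(0,1)\cup(1,\infty)$, the quantum Tsallis entropy is $H_\alpha(\rho)=\frac{1}{1-\alpha}\bigl(\mathrm{tr}(\rho^\alpha)-1\bigr)$ ($\rho^\alpha$ via spectral decomposition); for $\alpha=1$, $H_1(\rho)=-\mathrm{tr}(\rho\log\rho)$ is the von Neumann entropy (with $0\log0=0$). The quantum Jensen–Tsallis divergence of density matrices $\rho_1,\dots,\rho_n$ with weights $\omega$ is $$D_\alpha^{\omega}(\rho_1,\dots,\rho_n)=H_\alpha\Bigl(\sum_{j=1}^n\omega_j\rho_j\Bigr)-\sum_{j=1}^n\omega_jH_\alpha(\rho_j).$$ *)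

theory Defs
  imports "HOL-Analysis.Analysis"
begin

definition mtrace :: "real^'m^'m \<Rightarrow> real" where
  "mtrace A = (\<Sum>i\<in>UNIV. A $ i $ i)"

definition diag_mat :: "real^'m \<Rightarrow> real^'m^'m" where
  "diag_mat d = (\<chi> i j. if i = j then d $ i else 0)"

definition density_matrix :: "real^'m^'m \<Rightarrow> bool" where
  "density_matrix A \<longleftrightarrow> transpose A = A \<and> (\<forall>x. 0 \<le> x \<bullet> (A *v x)) \<and> mtrace A = 1"

definition mat_fun :: "(real \<Rightarrow> real) \<Rightarrow> real^'m^'m \<Rightarrow> real^'m^'m" where
  "mat_fun f A = (let p = (SOME (U, d). orthogonal_matrix U \<and> A = U ** diag_mat d ** transpose U)
     in fst p ** diag_mat (\<chi> i. f (snd p $ i)) ** transpose (fst p))"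

definition xlogx :: "real \<Rightarrow> real" where
  "xlogx x = (if x = 0 then 0 else x * ln x)"

definition qtsallis :: "real \<Rightarrow> real^'m^'m \<Rightarrow> real" where
  "qtsallis \<alpha> \<rho> = (if \<alpha> = 1 then - mtrace (mat_fun xlogx \<rho>)
      else (mtrace (mat_fun (\<lambda>x. x powr \<alpha>) \<rho>) - 1) / (1 - \<alpha>))"

definition qjt_div :: "real \<Rightarrow> nat \<Rightarrow> (nat \<Rightarrow> real) \<Rightarrow> (nat \<Rightarrow> real^'m^'m) \<Rightarrow> real" where
  "qjt_div \<alpha> n w \<rho> = qtsallis \<alpha> (\<Sum>j<n. w j *\<^sub>R \<rho> j) - (\<Sum>j<n. w j * qtsallis \<alpha> (\<rho> j))"

definition ctsallis :: "real \<Rightarrow> nat \<Rightarrow> (nat \<Rightarrow> real) \<Rightarrow> real" where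
  "ctsallis \<alpha> n w = (if \<alpha> = 1 then - (\<Sum>j<n. xlogx (w j))
      else ((\<Sum>j<n. w j powr \<alpha>) - 1) / (1 - \<alpha>))"

end

theory Submission
  imports Defs
begin

lemma sym_inner:
  fixes A :: "real^'n^'n"
  assumes "transpose A = A"
  shows "(A *v x) \<bullet> y = x \<bullet> (A *v y)"
proof -
  have "(A *v x) \<bullet> y = y \<bullet> (A *v x)" by (rule inner_commute)
  also have "\<dots> = (y v* A) \<bullet> x" by (rule dot_lmul_matrix[symmetric])
  also have "y v* A = transpose A *v y" by (rule transpose_matrix_vector[symmetric])
  also have "\<dots> = A *v y" using assms by simp
  finally show ?thesis by (simp only: inner_commute[of "A *v y" x])
qed

lemma quad_zero:
  fixes b c :: real
  assumes "\<And>t. 2*t*b + t^2*c \<le> 0"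
  shows "b = 0"
proof (rule ccontr)
  assume nz: "b \<noteq> 0"
  define k where "k = \<bar>c\<bar> + 1"
  have pos: "k > 0" by (simp add: k_def)
  define t where "t = b / k"
  have "2*t*b + t^2*c \<le> 0" by (rule assms)
  hence H1: "k^2 * (2*t*b + t^2*c) \<le> 0" using pos by (simp add: mult_nonpos_nonneg mult_le_0_iff)
  have H2: "k^2 * (2*t*b + t^2*c) = 2*(k*b^2) + c*b^2"
    using pos by (simp add: t_def power2_eq_square field_simps)
  have H3: "c*b^2 \<ge> - (\<bar>c\<bar>*b^2)" by (simp add: mult_right_mono[of "-\<bar>c\<bar>" c "b^2", simplified] )
  have H4: "b^2 > 0" using nz by simp
  have H5: "k*b^2 = \<bar>c\<bar>*b^2 + b^2" by (simp add: k_def algebra_simps)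
  have H6: "\<bar>c\<bar>*b^2 \<ge> 0" by simp
  show False using H1 H2 H3 H4 H5 H6 by linarith
qed
lemma eig_step:
  fixes A :: "real^'n^'n" and F :: "(real^'n) set"
  assumes sym: "transpose A = A" and fin: "finite F" and card: "card F < CARD('n)"
    and eig: "\<And>v. v \<in> F \<Longrightarrow> \<exists>\<mu>. A *v v = \<mu> *\<^sub>R v"
  shows "\<exists>x. norm x = 1 \<and> (\<forall>v\<in>F. v \<bullet> x = 0) \<and> (\<exists>\<mu>. A *v x = \<mu> *\<^sub>R x)"
proof -
  define K where "K = {x. norm x = 1 \<and> (\<forall>v\<in>F. v \<bullet> x = 0)}"
  have "dim F < DIM(real^'n)"
    using dim_le_card'[OF fin] card by simp
  then obtain x0 where x0: "x0 \<noteq> 0" "\<And>y. y \<in> span F \<Longrightarrow> orthogonal x0 y"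
    using orthogonal_to_subspace_exists by blast
  have "x0 /\<^sub>R norm x0 \<in> K"
    using x0 span_base by (auto simp: K_def orthogonal_def inner_commute)
  hence Kne: "K \<noteq> {}" by blast
  have "closed K"
  proof -
    have "K = sphere 0 1 \<inter> (\<Inter>v\<in>F. {x. v \<bullet> x = 0})" by (auto simp: K_def)
    moreover have "closed (\<Inter>v\<in>F. {x. v \<bullet> x = 0})"
      by (intro closed_INT ballI closed_hyperplane)
    ultimately show ?thesis by (simp add: closed_Int)
  qed
  moreover have "bounded K" unfolding K_def by (rule bounded_subset[of "cball 0 1"]) auto
  ultimately have cK: "compact K" by (simp add: compact_eq_bounded_closed)
  have cont: "continuous_on K (\<lambda>x. x \<bullet> (A *v x))"
    by (intro continuous_intros linear_continuous_on matrix_vector_mul_linear)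
  obtain x where xK: "x \<in> K" and xmax: "\<And>y. y \<in> K \<Longrightarrow> y \<bullet> (A *v y) \<le> x \<bullet> (A *v x)"
    using continuous_attains_sup[OF cK Kne cont] by blast
  define l where "l = x \<bullet> (A *v x)"
  have nx: "norm x = 1" "x \<bullet> x = 1" using xK by (auto simp: K_def norm_eq_1)
  have xF: "\<And>v. v \<in> F \<Longrightarrow> v \<bullet> x = 0" using xK by (auto simp: K_def)
  have key: "y \<bullet> (A *v x) = 0" if yF: "\<And>v. v \<in> F \<Longrightarrow> v \<bullet> y = 0" and yx: "y \<bullet> x = 0" for y
  proof (rule quad_zero[where c = "y \<bullet> (A *v y) - l * (y \<bullet> y)"])
    fix t :: real
    define z where "z = x + t *\<^sub>R y"
    have zz: "z \<bullet> z = 1 + t^2 * (y \<bullet> y)"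
      using nx yx unfolding z_def by (simp add: algebra_simps inner_commute power2_eq_square)
    have zpos: "z \<bullet> z > 0" using zz by (smt (verit) inner_ge_zero mult_nonneg_nonneg zero_le_power2)
    have nzz: "norm z \<noteq> 0" using zpos by auto
    have "z /\<^sub>R norm z \<in> K"
      using nzz xF yF unfolding K_def z_def
      by (auto simp: inner_add_right)
    hence "(z /\<^sub>R norm z) \<bullet> (A *v (z /\<^sub>R norm z)) \<le> l" using xmax l_def by blast
    moreover have "(z /\<^sub>R norm z) \<bullet> (A *v (z /\<^sub>R norm z)) = (z \<bullet> (A *v z)) / (z \<bullet> z)"
      using nzz by (simp add: matrix_vector_mult_scaleR power2_norm_eq_inner[symmetric] power2_eq_square field_simps)
    ultimately have "z \<bullet> (A *v z) \<le> l * (z \<bullet> z)" using zpos by (simp add: divide_le_eq)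
    moreover have "z \<bullet> (A *v z) = l + 2*t*(y \<bullet> (A *v x)) + t^2 * (y \<bullet> (A *v y))"
    proof -
      have Az: "A *v z = A *v x + t *\<^sub>R (A *v y)"
        unfolding z_def by (simp add: matrix_vector_right_distrib matrix_vector_mult_scaleR)
      have s1: "x \<bullet> (A *v y) = y \<bullet> (A *v x)"
        using sym_inner[OF sym, of x y] by (simp add: inner_commute)
      have "z \<bullet> (A *v z) = x \<bullet> (A *v x) + t * (x \<bullet> (A *v y)) + t * (y \<bullet> (A *v x)) + t*t * (y \<bullet> (A *v y))"
        unfolding Az unfolding z_def by (simp add: inner_add_left inner_add_right algebra_simps)
      thus ?thesis using s1 unfolding l_def by (simp add: power2_eq_square)
    qed
    ultimately show "2*t*(y \<bullet> (A *v x)) + t^2*(y \<bullet> (A *v y) - l * (y \<bullet> y)) \<le> 0"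
      using zz by (simp add: algebra_simps)
  qed
  define y where "y = A *v x - l *\<^sub>R x"
  have "v \<bullet> y = 0" if vF: "v \<in> F" for v
  proof -
    obtain \<mu> where "A *v v = \<mu> *\<^sub>R v" using eig vF by blast
    hence "v \<bullet> (A *v x) = 0" using sym_inner[OF sym, of v x] xF[OF vF] by simp
    thus ?thesis using xF[OF vF] by (simp add: y_def inner_diff_right)
  qed
  moreover have "y \<bullet> x = 0"
  proof -
    have "y \<bullet> x = (A *v x) \<bullet> x - l * (x \<bullet> x)" unfolding y_def by (simp add: inner_diff_left)
    also have "(A *v x) \<bullet> x = l" unfolding l_def by (rule inner_commute)
    finally show ?thesis using nx by simp
  qed
  ultimately have "y \<bullet> (A *v x) = 0" by (intro key)
  hence "y \<bullet> y = 0" using \<open>y \<bullet> x = 0\<close>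
    by (simp add: y_def inner_diff_right)
  hence "A *v x = l *\<^sub>R x" by (simp add: y_def)
  thus ?thesis using nx xF by blast
qed

lemma eig_family:
  fixes A :: "real^'n^'n"
  assumes sym: "transpose A = A" and fS: "finite S"
  shows "\<exists>v::'n \<Rightarrow> real^'n. (\<forall>i\<in>S. norm (v i) = 1 \<and> (\<exists>\<mu>. A *v v i = \<mu> *\<^sub>R v i)) \<and>
            (\<forall>i\<in>S. \<forall>j\<in>S. i \<noteq> j \<longrightarrow> v i \<bullet> v j = 0)"
  using fS
proof (induction S rule: finite_induct)
  case empty show ?case by simp
next
  case (insert a S)
  from insert.IH obtain v where v1: "\<forall>i\<in>S. norm (v i) = 1 \<and> (\<exists>\<mu>. A *v v i = \<mu> *\<^sub>R v i)"
    and v2: "\<forall>i\<in>S. \<forall>j\<in>S. i \<noteq> j \<longrightarrow> v i \<bullet> v j = 0" by (elim exE conjE)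
  have "card S < CARD('n)"
    using insert(2) by (intro psubset_card_mono) auto
  hence "card (v ` S) < CARD('n)" using card_image_le[OF insert(1), of v] by linarith
  moreover have "\<And>w. w \<in> v ` S \<Longrightarrow> \<exists>\<mu>. A *v w = \<mu> *\<^sub>R w" using v1 by blast
  ultimately obtain x where x: "norm x = 1" "\<forall>w\<in>v ` S. w \<bullet> x = 0" "\<exists>\<mu>. A *v x = \<mu> *\<^sub>R x"
    using eig_step[OF sym, of "v ` S"] insert(1) by blast
  define v' where "v' = v(a := x)"
  have "\<forall>i\<in>insert a S. norm (v' i) = 1 \<and> (\<exists>\<mu>. A *v v' i = \<mu> *\<^sub>R v' i)"
    using v1 x by (auto simp: v'_def)
  moreover have "\<forall>i\<in>insert a S. \<forall>j\<in>insert a S. i \<noteq> j \<longrightarrow> v' i \<bullet> v' j = 0"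
  proof (intro ballI impI)
    fix i j assume ij: "i \<in> insert a S" "j \<in> insert a S" "i \<noteq> j"
    have xo: "\<And>j. j \<in> S \<Longrightarrow> x \<bullet> v j = 0" using x(2) by (simp add: inner_commute)
    show "v' i \<bullet> v' j = 0"
    proof (cases "i = a")
      case True thus ?thesis using ij xo insert(2) by (auto simp: v'_def)
    next
      case False
      show ?thesis
      proof (cases "j = a")
        case True thus ?thesis using ij x(2) \<open>i \<noteq> a\<close> by (auto simp: v'_def)
      next
        case False thus ?thesis using ij v2 \<open>i \<noteq> a\<close> by (auto simp: v'_def)
      qed
    qed
  qed
  ultimately show ?case by blast
qed

lemma spectral:
  fixes A :: "real^'n^'n"
  assumes sym: "transpose A = A"
  shows "\<exists>U d. orthogonal_matrix U \<and> A = U ** diag_mat d ** transpose U"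
proof -
  obtain v :: "'n \<Rightarrow> real^'n" where v1: "\<forall>i. norm (v i) = 1 \<and> (\<exists>\<mu>. A *v v i = \<mu> *\<^sub>R v i)"
    and v2: "\<forall>i j. i \<noteq> j \<longrightarrow> v i \<bullet> v j = 0"
    using eig_family[OF sym finite_class.finite_UNIV] by auto
  obtain \<mu> where mu: "\<And>i. A *v v i = \<mu> i *\<^sub>R v i" using v1 by metis
  define U :: "real^'n^'n" where "U = (\<chi> r c. v c $ r)"
  define d :: "real^'n" where "d = (\<chi> i. \<mu> i)"
  have col: "column c U = v c" for c by (simp add: U_def column_def vec_eq_iff)
  have orth: "orthogonal_matrix U"
    unfolding orthogonal_matrix_orthonormal_columns col using v1 v2 by (auto simp: orthogonal_def)
  have AU: "A ** U = U ** diag_mat d"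
  proof -
    have "(A ** U) $ r $ c = (U ** diag_mat d) $ r $ c" for r c
    proof -
      have "(A ** U) $ r $ c = (A *v v c) $ r"
        by (simp add: matrix_matrix_mult_def matrix_vector_mult_def U_def)
      also have "\<dots> = \<mu> c * v c $ r" by (simp add: mu)
      also have "\<dots> = (U ** diag_mat d) $ r $ c"
        by (simp add: matrix_matrix_mult_def diag_mat_def U_def d_def if_distrib cong: if_cong)
      finally show ?thesis .
    qed
    thus ?thesis by (simp add: vec_eq_iff)
  qed
  have "A = A ** (U ** transpose U)" using orth by (simp add: orthogonal_matrix_def)
  also have "\<dots> = (A ** U) ** transpose U" by (rule matrix_mul_assoc)
  also have "\<dots> = U ** diag_mat d ** transpose U" by (simp only: AU)
  finally show ?thesis using orth by blast
qed


definition cd :: "real^'n^'n \<Rightarrow> real^'n \<Rightarrow> 'n \<Rightarrow> real" where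
  "cd U x k = (transpose U *v x) $ k"

lemma inner_mv: "x \<bullet> (U *v y) = (transpose U *v x) \<bullet> (y::real^'n)"
proof -
  have "x \<bullet> (U *v y) = (x v* U) \<bullet> y" by (rule dot_lmul_matrix[symmetric])
  also have "x v* U = transpose U *v x" by (rule transpose_matrix_vector[symmetric])
  finally show ?thesis .
qed

lemma diag_mv: "(diag_mat d *v y) $ i = d $ i * y $ i"
proof -
  have "(diag_mat d *v y) $ i = (\<Sum>j\<in>UNIV. (if i = j then d $ i * y $ j else 0))"
    unfolding matrix_vector_mult_def diag_mat_def vec_lambda_beta by (intro sum.cong) auto
  also have "\<dots> = d $ i * y $ i" by (simp add: sum.delta)
  finally show ?thesis .
qed

lemma diag_quad: "y \<bullet> (diag_mat d *v y) = (\<Sum>k\<in>UNIV. d $ k * (y $ k)^2)"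
  by (simp add: inner_vec_def diag_mv power2_eq_square algebra_simps)

lemma quad_decomp:
  fixes U :: "real^'n^'n"
  shows "x \<bullet> ((U ** diag_mat d ** transpose U) *v x) = (\<Sum>k\<in>UNIV. d $ k * (cd U x k)^2)"
proof -
  have "(U ** diag_mat d ** transpose U) *v x = U *v (diag_mat d *v (transpose U *v x))"
    by (simp only: matrix_vector_mul_assoc[symmetric])
  hence "x \<bullet> ((U ** diag_mat d ** transpose U) *v x) = (transpose U *v x) \<bullet> (diag_mat d *v (transpose U *v x))"
    by (simp only: inner_mv)
  also have "\<dots> = (\<Sum>k\<in>UNIV. d $ k * (cd U x k)^2)" by (simp only: diag_quad cd_def)
  finally show ?thesis .
qed

lemma cd_norm:
  fixes U :: "real^'n^'n"
  assumes "orthogonal_matrix U"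
  shows "(\<Sum>k\<in>UNIV. (cd U x k)^2) = x \<bullet> x"
proof -
  have "(\<Sum>k\<in>UNIV. (cd U x k)^2) = (transpose U *v x) \<bullet> (transpose U *v x)"
    by (simp add: cd_def inner_vec_def power2_eq_square)
  also have "\<dots> = x \<bullet> (U *v (transpose U *v x))" by (simp only: inner_mv)
  also have "U *v (transpose U *v x) = x" using assms
    by (simp only: matrix_vector_mul_assoc orthogonal_matrix_def matrix_vector_mul_lid)
  finally show ?thesis .
qed

lemma cd_inv:
  fixes U :: "real^'n^'n"
  assumes "orthogonal_matrix U"
  shows "cd U (U *v t) k = t $ k"
proof -
  have "transpose U *v (U *v t) = t" using assms
    by (simp only: matrix_vector_mul_assoc orthogonal_matrix_def matrix_vector_mul_lid)
  thus ?thesis by (simp add: cd_def)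
qed

lemma cd_sym:
  fixes U V :: "real^'n^'n"
  shows "cd U (V *v axis i 1) k = cd V (U *v axis k 1) i"
  by (simp add: cd_def matrix_vector_mult_def axis_def transpose_def if_distrib mult.commute cong: if_cong)

lemma mtrace_decomp:
  fixes U :: "real^'n^'n"
  assumes "orthogonal_matrix U"
  shows "mtrace (U ** diag_mat d ** transpose U) = (\<Sum>k\<in>UNIV. d $ k)"
proof -
  have "mtrace (U ** diag_mat d ** transpose U) = trace (U ** diag_mat d ** transpose U)"
    by (simp add: mtrace_def trace_def)
  also have "\<dots> = trace (transpose U ** (U ** diag_mat d))" by (rule trace_mul_sym)
  also have "transpose U ** (U ** diag_mat d) = diag_mat d" using assms
    by (simp only: matrix_mul_assoc orthogonal_matrix_def matrix_mul_lid)
  also have "trace (diag_mat d) = (\<Sum>k\<in>UNIV. d $ k)" by (simp add: trace_def diag_mat_def)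
  finally show ?thesis .
qed

definition SP :: "real^'n^'n \<Rightarrow> (real^'n^'n) \<times> (real^'n)" where
  "SP A = (SOME (U, d). orthogonal_matrix U \<and> A = U ** diag_mat d ** transpose U)"

lemma SP_spec:
  fixes A :: "real^'n^'n"
  assumes "transpose A = A"
  shows "orthogonal_matrix (fst (SP A)) \<and> A = fst (SP A) ** diag_mat (snd (SP A)) ** transpose (fst (SP A))"
proof -
  obtain U d where "orthogonal_matrix U \<and> A = U ** diag_mat d ** transpose U"
    using spectral[OF assms] by blast
  hence "\<exists>p. (case p of (U, d) \<Rightarrow> orthogonal_matrix U \<and> A = U ** diag_mat d ** transpose U)" by auto
  hence "case SP A of (U, d) \<Rightarrow> orthogonal_matrix U \<and> A = U ** diag_mat d ** transpose U"
    unfolding SP_def by (rule someI_ex)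
  thus ?thesis by (cases "SP A") simp
qed

lemma mat_fun_SP: "mat_fun f A = fst (SP A) ** diag_mat (\<chi> i. f (snd (SP A) $ i)) ** transpose (fst (SP A))"
  by (simp add: mat_fun_def SP_def Let_def)

lemma mtrace_mat_fun:
  fixes A :: "real^'n^'n"
  assumes "transpose A = A"
  shows "mtrace (mat_fun f A) = (\<Sum>k\<in>UNIV. f (snd (SP A) $ k))"
  using SP_spec[OF assms] by (simp add: mat_fun_SP mtrace_decomp)

lemma quad_sum:
  fixes \<rho> :: "nat \<Rightarrow> real^'n^'n"
  shows "x \<bullet> ((\<Sum>j<n. w j *\<^sub>R \<rho> j) *v x) = (\<Sum>j<n. w j * (x \<bullet> (\<rho> j *v x)))"
  by (induction n) (simp_all add: matrix_vector_mult_add_rdistrib scaleR_matrix_vector_assoc[symmetric] inner_add_right)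



lemma convex_extend0:
  fixes f g :: "real \<Rightarrow> real"
  assumes g: "convex_on {0<..} g" and fg: "\<And>x. x > 0 \<Longrightarrow> f x = g x" and f0: "f 0 = 0"
    and star: "\<And>t y. 0 \<le> t \<Longrightarrow> t \<le> 1 \<Longrightarrow> 0 \<le> y \<Longrightarrow> f (t * y) \<le> t * f y"
  shows "convex_on {0..} f"
proof (rule convex_onI)
  show "convex {0::real..}" by simp
  fix t x y :: real assume t: "0 < t" "t < 1" and xy: "x \<in> {0..}" "y \<in> {0..}"
  show "f ((1 - t) *\<^sub>R x + t *\<^sub>R y) \<le> (1 - t) * f x + t * f y"
  proof (cases "x = 0")
    case True thus ?thesis using star[of t y] t xy f0 by simp
  next
    case xnz: False
    show ?thesis
    proof (cases "y = 0")
      case True thus ?thesis using star[of "1-t" x] t xy f0 by simp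
    next
      case False
      hence xp: "x > 0" "y > 0" using xnz xy by auto
      have "(1 - t) *\<^sub>R x + t *\<^sub>R y > 0" using xp t
        by (simp add: add_pos_pos)
      hence "f ((1 - t) *\<^sub>R x + t *\<^sub>R y) = g ((1 - t) *\<^sub>R x + t *\<^sub>R y)" by (rule fg)
      also have "\<dots> \<le> (1 - t) * g x + t * g y"
        using convex_onD[OF g, of t x y] t xp by simp
      finally show ?thesis using fg xp by simp
    qed
  qed
qed

lemma convex_powr0:
  assumes "(a::real) \<ge> 1"
  shows "convex_on {0..} (\<lambda>x. x powr a)"
proof (rule convex_extend0[OF powr_convex[OF assms]])
  show "0 powr a = (0::real)" using assms by simp
  fix t y :: real assume ty: "0 \<le> t" "t \<le> 1" "0 \<le> y"
  have "(t * y) powr a = t powr a * y powr a" using ty by (simp add: powr_mult)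
  also have "t powr a \<le> t powr 1" using powr_mono'[of 1 a t] ty assms by simp
  hence "t powr a * y powr a \<le> t * y powr a" using ty by (simp add: mult_right_mono)
  finally show "(t * y) powr a \<le> t * y powr a" .
qed simp

lemma convex_xlogx: "convex_on {0..} xlogx"
proof (rule convex_extend0[of "\<lambda>x. x * ln x"])
  show "convex_on {0<..} (\<lambda>x::real. x * ln x)"
  proof (rule f''_ge0_imp_convex[where f' = "\<lambda>x. ln x + 1" and f'' = "\<lambda>x. 1 / x"])
    show "convex {0::real<..}" by simp
    fix x :: real assume "x \<in> {0<..}"
    hence x: "x > 0" by simp
    show "DERIV (\<lambda>x. x * ln x) x :> ln x + 1"
      using x by (auto intro!: derivative_eq_intros)
    show "DERIV (\<lambda>x. ln x + 1) x :> 1 / x"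
      using x by (auto intro!: derivative_eq_intros)
    show "0 \<le> 1 / x" using x by simp
  qed
  show "\<And>x. 0 < x \<Longrightarrow> xlogx x = x * ln x" by (simp add: xlogx_def)
  show "xlogx 0 = 0" by (simp add: xlogx_def)
  fix t y :: real assume ty: "0 \<le> t" "t \<le> 1" "0 \<le> y"
  show "xlogx (t * y) \<le> t * xlogx y"
  proof (cases "t = 0 \<or> y = 0")
    case True thus ?thesis by (auto simp: xlogx_def)
  next
    case False
    hence p: "t > 0" "y > 0" using ty by auto
    have "xlogx (t * y) = t * y * ln t + t * (y * ln y)"
      using p by (simp add: xlogx_def ln_mult algebra_simps)
    moreover have "t * y * ln t \<le> 0" using p ty by (simp add: mult_nonneg_nonpos)
    ultimately show ?thesis using p by (simp add: xlogx_def)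
  qed
qed

lemma jensen0:
  fixes f :: "real \<Rightarrow> real" and p c :: "'k \<Rightarrow> real"
  assumes cvx: "convex_on {0..} f" and f0: "f 0 = 0" and fin: "finite K"
    and p: "\<And>k. k \<in> K \<Longrightarrow> p k \<ge> 0" and ps: "sum p K \<le> 1"
    and c: "\<And>k. k \<in> K \<Longrightarrow> c k \<ge> 0"
  shows "f (\<Sum>k\<in>K. p k * c k) \<le> (\<Sum>k\<in>K. p k * f (c k))"
proof (cases "sum p K = 0")
  case True
  hence "\<forall>k\<in>K. p k = 0" using sum_nonneg_eq_0_iff[OF fin] p by blast
  thus ?thesis using f0 by simp
next
  case False
  define s where "s = sum p K"
  have s: "s > 0" "s \<le> 1" using False p ps sum_nonneg[of K p] unfolding s_def by force+
  have Kne: "K \<noteq> {}" using False by auto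
  define z where "z = (\<Sum>k\<in>K. (p k / s) *\<^sub>R c k)"
  have z0: "z \<ge> 0" unfolding z_def using p c s by (auto intro!: sum_nonneg)
  have "f z \<le> (\<Sum>k\<in>K. (p k / s) * f (c k))"
    unfolding z_def
  proof (rule convex_on_sum[OF fin Kne cvx])
    show "(\<Sum>k\<in>K. p k / s) = 1" using s by (simp add: sum_divide_distrib[symmetric] s_def)
  qed (use p c s in auto)
  have "f ((1 - s) *\<^sub>R 0 + s *\<^sub>R z) \<le> (1 - s) * f 0 + s * f z"
    using convex_onD[OF cvx, of s 0 z] s z0 by simp
  hence "f (s * z) \<le> s * f z" using f0 by simp
  also have "\<dots> \<le> s * (\<Sum>k\<in>K. (p k / s) * f (c k))" using \<open>f z \<le> _\<close> s by simp
  also have "\<dots> = (\<Sum>k\<in>K. p k * f (c k))" using s by (simp add: sum_distrib_left)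
  finally show ?thesis using s by (simp add: z_def sum_distrib_left)
qed



lemma cd_inner: "cd U x i = x \<bullet> (U *v axis i (1::real))"
proof -
  have "cd U x i = (transpose U *v x) \<bullet> axis i 1" by (simp add: cd_def inner_axis)
  also have "\<dots> = x \<bullet> (U *v axis i 1)" by (simp only: inner_mv)
  finally show ?thesis .
qed

lemma sum_axis_sq: "(\<Sum>k\<in>UNIV. c $ k * ((axis m (1::real)) $ k)^2) = c $ m"
proof -
  have "(\<Sum>k\<in>UNIV. c $ k * ((axis m (1::real)) $ k)^2) = (\<Sum>k\<in>UNIV. if k = m then c $ k else 0)"
    by (intro sum.cong) (auto simp: axis_def)
  thus ?thesis by simp
qed

lemma double_sum_ge:
  fixes X :: "nat \<Rightarrow> 'i::finite \<Rightarrow> real"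
  assumes "j < n" "\<And>j. j < n \<Longrightarrow> w j \<ge> 0" "\<And>j i. j < n \<Longrightarrow> X j i \<ge> 0"
  shows "w j * X j i \<le> (\<Sum>j<n. w j * (\<Sum>i\<in>UNIV. X j i))"
proof -
  have "X j i \<le> (\<Sum>i\<in>UNIV. X j i)" using assms by (intro member_le_sum) auto
  hence "w j * X j i \<le> w j * (\<Sum>i\<in>UNIV. X j i)" using assms by (intro mult_left_mono) auto
  also have "\<dots> \<le> (\<Sum>j<n. w j * (\<Sum>i\<in>UNIV. X j i))"
    using assms by (intro member_le_sum) (auto intro!: mult_nonneg_nonneg sum_nonneg)
  finally show ?thesis .
qed

lemma main_ineq:
  fixes f :: "real \<Rightarrow> real" and UC :: "real^'n^'n" and c :: "real^'n"
    and U :: "nat \<Rightarrow> real^'n^'n" and l :: "nat \<Rightarrow> real^'n" and w :: "nat \<Rightarrow> real"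
  assumes cvx: "convex_on {0..} f" and f0: "f 0 = 0"
    and oC: "orthogonal_matrix UC"
    and oU: "\<And>j. j < n \<Longrightarrow> orthogonal_matrix (U j)"
    and l0: "\<And>j i. j < n \<Longrightarrow> l j $ i \<ge> 0"
    and w0: "\<And>j. j < n \<Longrightarrow> w j \<ge> 0"
    and Ceq: "\<And>x. (\<Sum>k\<in>UNIV. c $ k * (cd UC x k)^2) = (\<Sum>j<n. w j * (\<Sum>i\<in>UNIV. l j $ i * (cd (U j) x i)^2))"
  shows "(\<Sum>j<n. \<Sum>i\<in>UNIV. f (w j * l j $ i)) \<le> (\<Sum>k\<in>UNIV. f (c $ k))"
proof -
  define a where "a j i k = cd UC (U j *v axis i 1) k" for j i k
  have a_sym: "a j i k = cd (U j) (UC *v axis k 1) i" for j i k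
    unfolding a_def by (rule cd_sym)
  have cC: "c $ k = (\<Sum>j<n. w j * (\<Sum>i\<in>UNIV. l j $ i * (a j i k)^2))" for k
  proof -
    have "(\<Sum>k'\<in>UNIV. c $ k' * (cd UC (UC *v axis k 1) k')^2) = c $ k"
      using cd_inv[OF oC] sum_axis_sq by simp
    thus ?thesis using Ceq[of "UC *v axis k 1"] by (simp add: a_sym)
  qed
  have nonneg: "\<And>j i k. j < n \<Longrightarrow> 0 \<le> w j * (l j $ i * (a j i k)^2)"
    using w0 l0 by (simp add: mult_nonneg_nonneg)
  have c0: "c $ k \<ge> 0" for k
    unfolding cC using w0 l0 by (auto intro!: sum_nonneg mult_nonneg_nonneg)
  have a1: "(\<Sum>k\<in>UNIV. (a j i k)^2) = 1" if "j < n" for j i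
  proof -
    have "(\<Sum>k\<in>UNIV. (a j i k)^2) = (U j *v axis i 1) \<bullet> (U j *v axis i 1)"
      unfolding a_def by (rule cd_norm[OF oC])
    also have "\<dots> = (\<Sum>i'\<in>UNIV. (cd (U j) (U j *v axis i 1) i')^2)"
      by (rule cd_norm[OF oU[OF that], symmetric])
    also have "\<dots> = (\<Sum>i'\<in>UNIV. 1 * ((axis i (1::real)) $ i')^2)"
      using cd_inv[OF oU[OF that]] by simp
    also have "\<dots> = 1" using sum_axis_sq[of "\<chi> k. 1" i] by simp
    finally show ?thesis .
  qed
  define p where "p j i k = (if c $ k = 0 then 0 else w j * l j $ i * (a j i k)^2 / c $ k)" for j i k
  have p0: "p j i k \<ge> 0" if "j < n" for j i k
    unfolding p_def using nonneg[OF that, of i k] c0[of k] by (auto simp: mult.assoc)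
  have vanish: "w j * l j $ i * (a j i k)^2 = 0" if "j < n" "c $ k = 0" for j i k
  proof -
    have "(\<Sum>j<n. w j * (\<Sum>i\<in>UNIV. l j $ i * (a j i k)^2)) = 0" using cC[of k] that by simp
    moreover have "\<forall>j'\<in>{..<n}. 0 \<le> w j' * (\<Sum>i\<in>UNIV. l j' $ i * (a j' i k)^2)"
      using w0 l0 by (auto intro!: sum_nonneg mult_nonneg_nonneg)
    ultimately have "\<forall>j'\<in>{..<n}. w j' * (\<Sum>i\<in>UNIV. l j' $ i * (a j' i k)^2) = 0"
      using sum_nonneg_eq_0_iff[of "{..<n}" "\<lambda>j. w j * (\<Sum>i\<in>UNIV. l j $ i * (a j i k)^2)"] by auto
    hence "w j * (\<Sum>i\<in>UNIV. l j $ i * (a j i k)^2) = 0" using that(1) by auto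
    hence "w j = 0 \<or> (\<Sum>i\<in>UNIV. l j $ i * (a j i k)^2) = 0" by simp
    thus ?thesis
    proof
      assume "(\<Sum>i\<in>UNIV. l j $ i * (a j i k)^2) = 0"
      hence "l j $ i * (a j i k)^2 = 0"
        using sum_nonneg_eq_0_iff[of UNIV "\<lambda>i. l j $ i * (a j i k)^2"] l0[OF that(1)] by auto
      thus ?thesis by simp
    qed simp
  qed
  have pc: "p j i k * c $ k = w j * l j $ i * (a j i k)^2" if "j < n" for j i k
    using vanish[OF that] by (simp add: p_def)
  have step: "f (w j * l j $ i) \<le> (\<Sum>k\<in>UNIV. p j i k * f (c $ k))" if jn: "j < n" for j i
  proof -
    define \<mu> where "\<mu> = w j * l j $ i"
    have mu0: "\<mu> \<ge> 0" unfolding \<mu>_def using w0 l0 jn by simp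
    have sum_pc: "(\<Sum>k\<in>UNIV. p j i k * c $ k) = \<mu>"
      using a1[OF jn, of i] by (simp add: pc[OF jn] \<mu>_def sum_distrib_left[symmetric])
    define t :: "real^'n" where "t = (\<chi> k. if c $ k = 0 then 0 else a j i k / c $ k)"
    define s where "s = (\<Sum>k\<in>UNIV. t $ k * a j i k)"
    have sp: "(\<Sum>k\<in>UNIV. p j i k) = \<mu> * s"
      unfolding s_def sum_distrib_left
      by (intro sum.cong) (auto simp: p_def t_def \<mu>_def power2_eq_square)
    have tk: "t $ k * a j i k = (if c $ k = 0 then 0 else (a j i k)^2 / c $ k)" for k
      by (simp add: t_def power2_eq_square)
    have s0: "s \<ge> 0" unfolding s_def tk using c0 by (auto intro!: sum_nonneg)
    define z where "z = UC *v t"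
    have "(\<Sum>k\<in>UNIV. c $ k * (cd UC z k)^2) = s"
      unfolding z_def s_def using cd_inv[OF oC]
      by (intro sum.cong) (auto simp: t_def power2_eq_square)
    moreover have "cd (U j) z i = s"
    proof -
      have "cd (U j) z i = (UC *v t) \<bullet> (U j *v axis i 1)" by (simp add: cd_inner z_def)
      also have "\<dots> = (U j *v axis i 1) \<bullet> (UC *v t)" by (rule inner_commute)
      also have "\<dots> = (transpose UC *v (U j *v axis i 1)) \<bullet> t" by (rule inner_mv)
      also have "\<dots> = t \<bullet> (transpose UC *v (U j *v axis i 1))" by (rule inner_commute)
      also have "\<dots> = s" by (simp add: inner_vec_def s_def a_def cd_def)
      finally show ?thesis .
    qed
    moreover have "w j * (l j $ i * (cd (U j) z i)^2) \<le> (\<Sum>j<n. w j * (\<Sum>i\<in>UNIV. l j $ i * (cd (U j) z i)^2))"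
      using jn w0 l0 by (intro double_sum_ge) auto
    ultimately have "\<mu> * s^2 \<le> s" using Ceq[of z] by (simp add: \<mu>_def mult.assoc)
    hence "\<mu> * s \<le> 1" using s0 mu0
      by (cases "s = 0") (auto simp: power2_eq_square mult.assoc[symmetric] mult_le_cancel_right)
    hence "(\<Sum>k\<in>UNIV. p j i k) \<le> 1" using sp by simp
    hence "f (\<Sum>k\<in>UNIV. p j i k * c $ k) \<le> (\<Sum>k\<in>UNIV. p j i k * f (c $ k))"
      using jensen0[OF cvx f0 finite_class.finite_UNIV, of "p j i" "\<lambda>k. c $ k"] p0[OF jn] c0 by blast
    thus ?thesis using sum_pc by (simp add: \<mu>_def)
  qed
  have "(\<Sum>j<n. \<Sum>i\<in>UNIV. f (w j * l j $ i)) \<le> (\<Sum>j<n. \<Sum>i\<in>UNIV. \<Sum>k\<in>UNIV. p j i k * f (c $ k))"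
    using step by (intro sum_mono) auto
  also have "\<dots> = (\<Sum>j<n. \<Sum>k\<in>UNIV. \<Sum>i\<in>UNIV. p j i k * f (c $ k))"
    by (rule sum.cong[OF refl], rule sum.swap)
  also have "\<dots> = (\<Sum>k\<in>UNIV. \<Sum>j<n. \<Sum>i\<in>UNIV. p j i k * f (c $ k))"
    by (rule sum.swap)
  also have "\<dots> = (\<Sum>k\<in>UNIV. f (c $ k) * (\<Sum>j<n. \<Sum>i\<in>UNIV. p j i k))"
    by (simp only: sum_distrib_right mult.commute[of "f _"])
  also have "\<dots> = (\<Sum>k\<in>UNIV. f (c $ k))"
  proof (intro sum.cong refl)
    fix k
    show "f (c $ k) * (\<Sum>j<n. \<Sum>i\<in>UNIV. p j i k) = f (c $ k)"
    proof (cases "c $ k = 0")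
      case True thus ?thesis using f0 by simp
    next
      case False
      have "(\<Sum>j<n. \<Sum>i\<in>UNIV. p j i k) = (\<Sum>j<n. w j * (\<Sum>i\<in>UNIV. l j $ i * (a j i k)^2)) / c $ k"
        using False by (simp add: p_def sum_divide_distrib sum_distrib_left mult.assoc)
      also have "\<dots> = 1" using False cC[of k] by simp
      finally show ?thesis by simp
    qed
  qed
  finally show ?thesis .
qed




lemma transpose_wsum:
  fixes \<rho> :: "nat \<Rightarrow> real^'m^'m"
  assumes "\<And>j. j < n \<Longrightarrow> transpose (\<rho> j) = \<rho> j"
  shows "transpose (\<Sum>j<n. w j *\<^sub>R \<rho> j) = (\<Sum>j<n. w j *\<^sub>R \<rho> j)"
proof -
  have "(transpose (\<Sum>j<n. w j *\<^sub>R \<rho> j)) $ a $ b = (\<Sum>j<n. w j *\<^sub>R \<rho> j) $ a $ b" for a b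
  proof -
    have "(transpose (\<Sum>j<n. w j *\<^sub>R \<rho> j)) $ a $ b = (\<Sum>j<n. w j * \<rho> j $ b $ a)"
      by (simp add: transpose_def sum_component)
    also have "\<dots> = (\<Sum>j<n. w j * \<rho> j $ a $ b)"
    proof (rule sum.cong[OF refl])
      fix j assume "j \<in> {..<n}"
      hence "transpose (\<rho> j) $ a $ b = \<rho> j $ a $ b" using assms by simp
      thus "w j * \<rho> j $ b $ a = w j * \<rho> j $ a $ b" by (simp add: transpose_def)
    qed
    also have "\<dots> = (\<Sum>j<n. w j *\<^sub>R \<rho> j) $ a $ b" by (simp add: sum_component)
    finally show ?thesis .
  qed
  thus ?thesis by (simp add: vec_eq_iff)
qed

lemma xlogx_mult: "0 \<le> a \<Longrightarrow> 0 \<le> b \<Longrightarrow> xlogx (a * b) = b * xlogx a + a * xlogx b"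
  by (cases "a = 0 \<or> b = 0") (auto simp: xlogx_def ln_mult algebra_simps)

lemma le_one_of_sum:
  fixes g :: "'k \<Rightarrow> real"
  assumes "finite K" "k \<in> K" "\<And>k. k \<in> K \<Longrightarrow> g k \<ge> 0" "sum g K = 1"
  shows "g k \<le> 1"
  using member_le_sum[of k K g] assms by auto

theorem proposition4:
  fixes \<alpha> :: real and n :: nat and w :: "nat \<Rightarrow> real" and \<rho> :: "nat \<Rightarrow> real^'m^'m"
  assumes "1 \<le> \<alpha>" "\<alpha> \<le> 2" "n \<ge> 1"
    and "\<And>j. j < n \<Longrightarrow> 0 \<le> w j" "(\<Sum>j<n. w j) = 1"
    and "\<And>j. j < n \<Longrightarrow> density_matrix (\<rho> j)"
  shows "qjt_div \<alpha> n w \<rho> \<le> ctsallis \<alpha> n w"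
proof -
  note w0 = assms(4) and wsum = assms(5)
  have symj: "\<And>j. j < n \<Longrightarrow> transpose (\<rho> j) = \<rho> j"
    and psdj: "\<And>j x. j < n \<Longrightarrow> 0 \<le> x \<bullet> (\<rho> j *v x)"
    and trj: "\<And>j. j < n \<Longrightarrow> mtrace (\<rho> j) = 1"
    using assms(6) by (auto simp: density_matrix_def)
  define C where "C = (\<Sum>j<n. w j *\<^sub>R \<rho> j)"
  have symC: "transpose C = C" unfolding C_def by (rule transpose_wsum[OF symj])
  define UC where "UC = fst (SP C)"
  define c where "c = snd (SP C)"
  define U where "U j = fst (SP (\<rho> j))" for j
  define l where "l j = snd (SP (\<rho> j))" for j
  have specC: "orthogonal_matrix UC" "C = UC ** diag_mat c ** transpose UC"
    using SP_spec[OF symC] by (auto simp: UC_def c_def)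
  have specj: "orthogonal_matrix (U j)" "\<rho> j = U j ** diag_mat (l j) ** transpose (U j)" if "j < n" for j
    using SP_spec[OF symj[OF that]] by (auto simp: U_def l_def)
  have Ceq: "(\<Sum>k\<in>UNIV. c $ k * (cd UC x k)^2) = (\<Sum>j<n. w j * (\<Sum>i\<in>UNIV. l j $ i * (cd (U j) x i)^2))" for x
  proof -
    have "(\<Sum>k\<in>UNIV. c $ k * (cd UC x k)^2) = x \<bullet> (C *v x)"
      using quad_decomp[of x UC c] specC(2) by simp
    also have "\<dots> = (\<Sum>j<n. w j * (x \<bullet> (\<rho> j *v x)))" unfolding C_def by (rule quad_sum)
    also have "\<dots> = (\<Sum>j<n. w j * (\<Sum>i\<in>UNIV. l j $ i * (cd (U j) x i)^2))"
    proof (rule sum.cong[OF refl])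
      fix j assume "j \<in> {..<n}"
      hence "x \<bullet> (\<rho> j *v x) = (\<Sum>i\<in>UNIV. l j $ i * (cd (U j) x i)^2)"
        using quad_decomp[of x "U j" "l j"] specj(2)[of j] by simp
      thus "w j * (x \<bullet> (\<rho> j *v x)) = w j * (\<Sum>i\<in>UNIV. l j $ i * (cd (U j) x i)^2)" by simp
    qed
    finally show ?thesis .
  qed
  have l0: "l j $ i \<ge> 0" if "j < n" for j i
  proof -
    have "(U j *v axis i 1) \<bullet> (\<rho> j *v (U j *v axis i 1)) = (\<Sum>k\<in>UNIV. l j $ k * (cd (U j) (U j *v axis i 1) k)^2)"
      using quad_decomp[of "U j *v axis i 1" "U j" "l j"] specj(2)[OF that] by simp
    also have "\<dots> = l j $ i" using cd_inv[OF specj(1)[OF that]] sum_axis_sq by simp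
    finally show ?thesis using psdj[OF that] by metis
  qed
  have lsum: "(\<Sum>i\<in>UNIV. l j $ i) = 1" if "j < n" for j
    using trj[OF that] mtrace_decomp[OF specj(1)[OF that], of "l j"] specj(2)[OF that] by simp
  have l1: "l j $ i \<le> 1" if "j < n" for j i
    using le_one_of_sum[of UNIV i "\<lambda>i. l j $ i"] l0[OF that] lsum[OF that] by simp
  have w1: "w j \<le> 1" if "j < n" for j
    using le_one_of_sum[of "{..<n}" j w] w0 wsum that by simp
  have trf: "\<And>g. mtrace (mat_fun g C) = (\<Sum>k\<in>UNIV. g (c $ k))"
    using mtrace_mat_fun[OF symC] by (simp add: c_def)
  have trfj: "\<And>g j. j < n \<Longrightarrow> mtrace (mat_fun g (\<rho> j)) = (\<Sum>i\<in>UNIV. g (l j $ i))"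
    using mtrace_mat_fun[OF symj] by (simp add: l_def)
  show ?thesis
  proof (cases "\<alpha> = 1")
    case True
    have main: "(\<Sum>j<n. \<Sum>i\<in>UNIV. xlogx (w j * l j $ i)) \<le> (\<Sum>k\<in>UNIV. xlogx (c $ k))"
      using main_ineq[OF convex_xlogx _ specC(1) specj(1) l0 w0 Ceq] by (simp add: xlogx_def)
    have "(\<Sum>i\<in>UNIV. xlogx (w j * l j $ i)) = xlogx (w j) + w j * (\<Sum>i\<in>UNIV. xlogx (l j $ i))"
      if "j < n" for j
      using l0[OF that] w0[OF that] lsum[OF that]
      by (simp add: xlogx_mult sum.distrib sum_distrib_left[symmetric] sum_distrib_right[symmetric])
    hence "(\<Sum>j<n. xlogx (w j) + w j * (\<Sum>i\<in>UNIV. xlogx (l j $ i))) \<le> (\<Sum>k\<in>UNIV. xlogx (c $ k))"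
      using main by simp
    thus ?thesis using True
      by (simp add: qjt_div_def qtsallis_def ctsallis_def C_def[symmetric] trf trfj sum.distrib
           sum_negf)
  next
    case False
    hence a1: "\<alpha> > 1" using assms(1) by simp
    define T where "T j = (\<Sum>i\<in>UNIV. l j $ i powr \<alpha>)" for j
    define Tc where "Tc = (\<Sum>k\<in>UNIV. c $ k powr \<alpha>)"
    have main: "(\<Sum>j<n. \<Sum>i\<in>UNIV. (w j * l j $ i) powr \<alpha>) \<le> Tc"
      unfolding Tc_def
      using main_ineq[OF convex_powr0[OF assms(1)] _ specC(1) specj(1) l0 w0 Ceq] by simp
    have "(\<Sum>i\<in>UNIV. (w j * l j $ i) powr \<alpha>) = w j powr \<alpha> * T j" if "j < n" for j
      using l0[OF that] w0[OF that] by (simp add: T_def powr_mult sum_distrib_left)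
    hence main2: "(\<Sum>j<n. w j powr \<alpha> * T j) \<le> Tc" using main by simp
    have T1: "T j \<le> 1" if "j < n" for j
    proof -
      have "l j $ i powr \<alpha> \<le> l j $ i" for i
        using powr_mono'[of 1 \<alpha> "l j $ i"] assms(1) l0[OF that] l1[OF that] by simp
      hence "T j \<le> (\<Sum>i\<in>UNIV. l j $ i)" unfolding T_def by (intro sum_mono) auto
      thus ?thesis using lsum[OF that] by simp
    qed
    have wa: "w j powr \<alpha> \<le> w j" if "j < n" for j
      using powr_mono'[of 1 \<alpha> "w j"] assms(1) w0[OF that] w1[OF that] by simp
    have trm: "w j * T j - w j powr \<alpha> * T j \<le> w j - w j powr \<alpha>" if "j < n" for j
    proof -
      have "(w j - w j powr \<alpha>) * T j \<le> (w j - w j powr \<alpha>) * 1"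
        using wa[OF that] T1[OF that] by (intro mult_left_mono) auto
      thus ?thesis by (simp add: algebra_simps)
    qed
    have "(\<Sum>j<n. w j * T j - w j powr \<alpha> * T j) \<le> (\<Sum>j<n. w j - w j powr \<alpha>)"
      using trm by (intro sum_mono) auto
    hence key: "(\<Sum>j<n. w j * T j) + (\<Sum>j<n. w j powr \<alpha>) \<le> Tc + 1"
      using main2 wsum by (simp add: sum_subtractf)
    have q: "qjt_div \<alpha> n w \<rho> = (Tc - 1) / (1 - \<alpha>) - (\<Sum>j<n. w j * ((T j - 1) / (1 - \<alpha>)))"
      using False by (simp add: qjt_div_def qtsallis_def C_def[symmetric] trf trfj Tc_def T_def)
    also have "\<dots> = (Tc - (\<Sum>j<n. w j * T j)) / (1 - \<alpha>)"
      using wsum a1 by (simp add: sum_divide_distrib[symmetric] diff_divide_distrib right_diff_distrib sum_subtractf)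
    also have "\<dots> \<le> ((\<Sum>j<n. w j powr \<alpha>) - 1) / (1 - \<alpha>)"
      using key a1 by (intro divide_right_mono_neg) auto
    also have "\<dots> = ctsallis \<alpha> n w" using False by (simp add: ctsallis_def)
    finally show ?thesis .
  qed
qed

end
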